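(* Consider the one-hidden-layer ReLU network setting below, trained by gradient descent with Polyak's momentum with step size $\eta>0$ and momentum parameter $\beta\in[0,1]$. Fix $R>0$ and $t\ge0$, and assume $\|w^{(r)}_s-w^{(r)}_0\|\le R$ for all $r\in[m]$ and all $s\in\{0,1,\dots,t+1\}$. Let $\xi_s:=u_s-y\in\mathbb{R}^n$ and define $$\iota_t:=\eta(H_0-H_t)\xi_t,\qquad \phi_t:=\xi_{t+1}-(1+\beta)\xi_t+\beta\xi_{t-1}+\eta H_t\xi_t,$$ so that $\begin{bmatrix}\xi_{t+1}\\ \xi_t\end{bmatrix}=\begin{bmatrix}(1+\beta)I_n-\eta H_0&-\beta I_n\\ I_n&0\end{bmatrix}\begin{bmatrix}\xi_t\\ \xi_{t-1}\end{bmatrix}+\begin{bmatrix}\phi_t+\iota_t\\0\end{bmatrix}$. Then for every $i\in[n]$, $$|\phi_t[i]|\le\frac{2\eta\sqrt n\,|S_i^\perp|}{m}\Big(\|u_t-y\|+\beta\sum_{s=0}^{t-1}\beta^{t-1-s}\|u_s-y\|\Big).$$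
   Context: Data $x_1,\dots,x_n\in\mathbb{R}^d$ with $\|x_i\|\le1$, labels $y\in\mathbb{R}^n$. Network $\mathcal N_W(x)=\frac{1}{\sqrt m}\sum_{r=1}^m a_r\sigma(\langle w^{(r)},x\rangle)$ with $\sigma(z)=z\mathbb{1}\{z\ge0\}$, fixed $a_r\in\{-1,1\}$, trainable $W=\{w^{(r)}\}_{r=1}^m\subset\mathbb{R}^d$. Loss $\ell(W)=\frac12\sum_i(y_i-\mathcal N_W(x_i))^2$, subgradient $\frac{\partial\ell(W)}{\partial w^{(r)}}:=\frac1{\sqrt m}\sum_{i=1}^n(\mathcal N_W(x_i)-y_i)a_r\mathbb{1}\{\langle w^{(r)},x_i\rangle\ge0\}x_i$. Gradient descent with Polyak's momentum: $w^{(r)}_{-1}:=w^{(r)}_0$, $w^{(r)}_{t+1}=w^{(r)}_t-\eta\frac{\partial\ell(W_t)}{\partial w^{(r)}_t}+\beta(w^{(r)}_t-w^{(r)}_{t-1})$. $u_t\in\mathbb{R}^n$ has entries $u_t[i]=\mathcal N_{W_t}(x_i)$. $H_t\in\mathbb{R}^{n\times n}$ has entries $(H_t)_{ij}=\frac1m\sum_{r=1}^m x_i^\top x_j\mathbb{1}\{\langle w^{(r)}_t,x_i\rangle\ge0\ \&\ \langle w^{(r)}_t,x_j\rangle\ge0\}$. For $i\in[n]$, $r\in[m]$, $A_{ir}$ is the event that there exists $w$ with $\|w-w^{(r)}_0\|\le R$ and $\mathbb{1}\{x_i^\top w^{(r)}_0\ge0\}\ne\mathbb{1}\{x_i^\top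 w\ge0\}$; $S_i:=\{r\in[m]:A_{ir}\text{ does not hold}\}$ and $S_i^\perp:=[m]\setminus S_i$. *)

theory Defs
  imports "HOL-Analysis.Analysis"
begin

text \<open>Data points are indexed by i < n, neurons by r < m. Weights W :: nat => 'a
  (neuron r has weight vector W r in the Euclidean space 'a = R^d).\<close>

definition relu :: "real \<Rightarrow> real" where
  "relu z = z * (if z \<ge> 0 then 1 else 0)"

definition ind :: "bool \<Rightarrow> real" where
  "ind b = (if b then 1 else 0)"

definition net :: "nat \<Rightarrow> (nat \<Rightarrow> real) \<Rightarrow> (nat \<Rightarrow> 'a::euclidean_space) \<Rightarrow> 'a \<Rightarrow> real" where
  "net m a W z = (1 / sqrt (real m)) * (\<Sum>r<m. a r * relu (inner (W r) z))"

definition loss_grad ::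
  "nat \<Rightarrow> nat \<Rightarrow> (nat \<Rightarrow> 'a::euclidean_space) \<Rightarrow> (nat \<Rightarrow> real) \<Rightarrow> (nat \<Rightarrow> real)
    \<Rightarrow> (nat \<Rightarrow> 'a) \<Rightarrow> nat \<Rightarrow> 'a" where
  "loss_grad n m x y a W r =
     (1 / sqrt (real m)) *\<^sub>R
       (\<Sum>i<n. ((net m a W (x i) - y i) * a r * ind (inner (W r) (x i) \<ge> 0)) *\<^sub>R x i)"

text \<open>Gradient descent with Polyak's momentum, started at W0, with w_{-1} := w_0.
  Hence w_1 = w_0 - eta grad(w_0) and w_{t+2} = w_{t+1} - eta grad(w_{t+1}) + beta (w_{t+1} - w_t).\<close>
fun hb_iter ::
  "nat \<Rightarrow> nat \<Rightarrow> (nat \<Rightarrow> 'a::euclidean_space) \<Rightarrow> (nat \<Rightarrow> real) \<Rightarrow> (nat \<Rightarrow> real)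
    \<Rightarrow> real \<Rightarrow> real \<Rightarrow> (nat \<Rightarrow> 'a) \<Rightarrow> nat \<Rightarrow> (nat \<Rightarrow> 'a)" where
  "hb_iter n m x y a \<eta> \<beta> W0 0 = W0"
| "hb_iter n m x y a \<eta> \<beta> W0 (Suc 0) =
     (\<lambda>r. W0 r - \<eta> *\<^sub>R loss_grad n m x y a W0 r)"
| "hb_iter n m x y a \<eta> \<beta> W0 (Suc (Suc t)) =
     (let W1 = hb_iter n m x y a \<eta> \<beta> W0 (Suc t); W2 = hb_iter n m x y a \<eta> \<beta> W0 t
      in (\<lambda>r. W1 r - \<eta> *\<^sub>R loss_grad n m x y a W1 r + \<beta> *\<^sub>R (W1 r - W2 r)))"

definition Hmat :: "nat \<Rightarrow> (nat \<Rightarrow> 'a::euclidean_space) \<Rightarrow> (nat \<Rightarrow> 'a) \<Rightarrow> nat \<Rightarrow> nat \<Rightarrow> real" where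
  "Hmat m x W i j = (1 / real m) *
     (\<Sum>r<m. inner (x i) (x j) * ind (inner (W r) (x i) \<ge> 0 \<and> inner (W r) (x j) \<ge> 0))"

text \<open>Euclidean norm of a vector in R^n represented as a function on {0..<n}.\<close>
definition vnorm :: "nat \<Rightarrow> (nat \<Rightarrow> real) \<Rightarrow> real" where
  "vnorm n v = sqrt (\<Sum>i<n. (v i)\<^sup>2)"

definition A_event :: "real \<Rightarrow> (nat \<Rightarrow> 'a::euclidean_space) \<Rightarrow> (nat \<Rightarrow> 'a) \<Rightarrow> nat \<Rightarrow> nat \<Rightarrow> bool" where
  "A_event R x W0 i r \<longleftrightarrow>
     (\<exists>w. norm (w - W0 r) \<le> R \<and> ((inner (x i) (W0 r) \<ge> 0) \<noteq> (inner (x i) w \<ge> 0)))"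

definition S_set :: "nat \<Rightarrow> real \<Rightarrow> (nat \<Rightarrow> 'a::euclidean_space) \<Rightarrow> (nat \<Rightarrow> 'a) \<Rightarrow> nat \<Rightarrow> nat set" where
  "S_set m R x W0 i = {r. r < m \<and> \<not> A_event R x W0 i r}"

definition S_perp :: "nat \<Rightarrow> real \<Rightarrow> (nat \<Rightarrow> 'a::euclidean_space) \<Rightarrow> (nat \<Rightarrow> 'a) \<Rightarrow> nat \<Rightarrow> nat set" where
  "S_perp m R x W0 i = {..<m} - S_set m R x W0 i"

end

theory Submission
  imports Defs
begin

lemma sum_abs_le_vnorm: "(\<Sum>j<n. \<bar>v j\<bar>) \<le> sqrt (real n) * vnorm n v"
proof -
  have "(\<Sum>j<n. \<bar>v j\<bar>)^2 \<le> (\<Sum>j<n. \<bar>v j\<bar>^2) * card {..<n}"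
    by (rule sum_squared_le_sum_of_squares)
  hence "(\<Sum>j<n. \<bar>v j\<bar>)^2 \<le> (\<Sum>j<n. (v j)^2) * real n" by simp
  hence "(\<Sum>j<n. \<bar>v j\<bar>) \<le> sqrt ((\<Sum>j<n. (v j)^2) * real n)" by (rule real_le_rsqrt)
  thus ?thesis by (simp add: vnorm_def real_sqrt_mult mult.commute)
qed

lemma relu_lip: "\<bar>relu a - relu b\<bar> \<le> \<bar>a - b\<bar>" unfolding relu_def by auto

lemma relu_same: "(a\<ge>0) = (b\<ge>0) \<Longrightarrow> relu a - relu b = ind (b \<ge> 0) * (a - b)"
  unfolding relu_def ind_def by auto

lemma ind_01: "0 \<le> ind b" "ind b \<le> 1" unfolding ind_def by auto

lemma grad_bound:
  fixes x :: "nat \<Rightarrow> 'a::euclidean_space"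
  assumes "\<forall>j<n. norm (x j) \<le> 1" "\<bar>a r\<bar> = 1"
  shows "norm (loss_grad n m x y a W r) \<le> (1/sqrt m) * (sqrt n * vnorm n (\<lambda>j. net m a W (x j) - y j))"
proof -
  have "norm (\<Sum>j<n. ((net m a W (x j) - y j) * a r * ind (inner (W r) (x j) \<ge> 0)) *\<^sub>R x j)
     \<le> (\<Sum>j<n. norm (((net m a W (x j) - y j) * a r * ind (inner (W r) (x j) \<ge> 0)) *\<^sub>R x j))"
    by (rule norm_sum)
  also have "\<dots> \<le> (\<Sum>j<n. \<bar>net m a W (x j) - y j\<bar>)"
  proof (rule sum_mono)
    fix j assume "j \<in> {..<n}"
    hence nx: "norm (x j) \<le> 1" using assms by auto
    have "norm (((net m a W (x j) - y j) * a r * ind (inner (W r) (x j) \<ge> 0)) *\<^sub>R x j)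
       = \<bar>net m a W (x j) - y j\<bar> * ind (inner (W r) (x j) \<ge> 0) * norm (x j)"
      using assms(2) by (simp add: abs_mult ind_def)
    also have "\<dots> \<le> \<bar>net m a W (x j) - y j\<bar> * 1 * 1"
      by (intro mult_mono) (use nx ind_01 in auto)
    finally show "norm (((net m a W (x j) - y j) * a r * ind (inner (W r) (x j) \<ge> 0)) *\<^sub>R x j)
       \<le> \<bar>net m a W (x j) - y j\<bar>" by simp
  qed
  also have "\<dots> \<le> sqrt n * vnorm n (\<lambda>j. net m a W (x j) - y j)"
    by (rule sum_abs_le_vnorm)
  finally show ?thesis unfolding loss_grad_def
    by (simp add: divide_right_mono)
qed

theorem lemma3:
  fixes n m :: nat and x :: "nat \<Rightarrow> 'a::euclidean_space" and y a :: "nat \<Rightarrow> real"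
    and W0 :: "nat \<Rightarrow> 'a" and \<eta> \<beta> R :: real and t :: nat
  defines "W \<equiv> hb_iter n m x y a \<eta> \<beta> W0"
  defines "\<xi> \<equiv> (\<lambda>s i. net m a (W s) (x i) - y i)"
  assumes m_pos: "m > 0"
    and x_norm: "\<forall>i<n. norm (x i) \<le> 1"
    and a_sign: "\<forall>r<m. a r = 1 \<or> a r = -1"
    and eta_pos: "\<eta> > 0"
    and beta_range: "0 \<le> \<beta>" "\<beta> \<le> 1"
    and R_pos: "R > 0"
    and stay_close: "\<forall>r<m. \<forall>s\<le>t+1. norm (W s r - W 0 r) \<le> R"
  shows "\<forall>i<n.
    \<bar>\<xi> (t+1) i - (1 + \<beta>) * \<xi> t i + \<beta> * \<xi> (t-1) i
      + \<eta> * (\<Sum>j<n. Hmat m x (W t) i j * \<xi> t j)\<bar>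
    \<le> 2 * \<eta> * sqrt (real n) * real (card (S_perp m R x W0 i)) / real m
       * (vnorm n (\<xi> t) + \<beta> * (\<Sum>s<t. \<beta> ^ (t - 1 - s) * vnorm n (\<xi> s)))"
proof -
  define G where "G s r = loss_grad n m x y a (W s) r" for s r
  define v where "v s = vnorm n (\<xi> s)" for s
  define Q where "Q s = (\<Sum>k<s. \<beta> ^ (s - 1 - k) * v k)" for s
  define c where "c = sqrt (real n) / sqrt (real m)"
  have W0': "W 0 = W0" by (simp add: W_def)
  have rec: "W (Suc s) r = W s r - \<eta> *\<^sub>R G s r + \<beta> *\<^sub>R (W s r - W (s-1) r)" for s r
    by (cases s) (simp_all add: W_def G_def Let_def)
  have Qrec: "Q (Suc s) = v s + \<beta> * Q s" for s
  proof -
    have "(\<Sum>k<s. \<beta> ^ (s - k) * v k) = (\<Sum>k<s. \<beta> * (\<beta> ^ (s - 1 - k) * v k))"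
    proof (rule sum.cong)
      fix k assume "k \<in> {..<s}"
      hence "s - k = Suc (s - 1 - k)" by auto
      thus "\<beta> ^ (s - k) * v k = \<beta> * (\<beta> ^ (s - 1 - k) * v k)" by simp
    qed simp
    thus ?thesis by (simp add: Q_def sum_distrib_left)
  qed
  have c_nn: "c \<ge> 0" by (simp add: c_def)
  have v_nn: "v s \<ge> 0" for s by (simp add: v_def vnorm_def sum_nonneg)
  have Q_nn: "Q s \<ge> 0" for s using beta_range v_nn by (simp add: Q_def sum_nonneg)
  have a_abs: "\<bar>a r\<bar> = 1" if "r < m" for r using a_sign that by auto
  have Gb: "norm (G s r) \<le> c * v s" if "r < m" for s r
    using grad_bound[of n x a r m y "W s", OF x_norm a_abs[OF that]]
    by (simp add: G_def c_def v_def \<xi>_def)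
  have Db: "norm (W (Suc s) r - W s r) \<le> \<eta> * c * (v s + \<beta> * Q s)" if "r < m" for s r
  proof (induction s)
    case 0
    have "W (Suc 0) r - W 0 r = - (\<eta> *\<^sub>R G 0 r)" using rec[of 0 r] by simp
    hence "norm (W (Suc 0) r - W 0 r) = \<eta> * norm (G 0 r)" using eta_pos by simp
    also have "\<dots> \<le> \<eta> * (c * v 0)" using Gb[OF that] eta_pos by (simp add: mult_left_mono)
    finally show ?case by (simp add: Q_def)
  next
    case (Suc s)
    have "W (Suc (Suc s)) r - W (Suc s) r = - (\<eta> *\<^sub>R G (Suc s) r) + \<beta> *\<^sub>R (W (Suc s) r - W s r)"
      using rec[of "Suc s" r] by simp
    hence "norm (W (Suc (Suc s)) r - W (Suc s) r) \<le> \<eta> * norm (G (Suc s) r) + \<beta> * norm (W (Suc s) r - W s r)"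
      using eta_pos beta_range by (metis norm_triangle_ineq norm_minus_cancel norm_scaleR abs_of_nonneg less_imp_le)
    also have "\<dots> \<le> \<eta> * (c * v (Suc s)) + \<beta> * (\<eta> * c * (v s + \<beta> * Q s))"
      by (intro add_mono mult_left_mono Gb[OF that] Suc.IH) (use eta_pos beta_range in auto)
    also have "\<dots> = \<eta> * c * (v (Suc s) + \<beta> * Q (Suc s))"
      by (simp add: Qrec algebra_simps)
    finally show ?case .
  qed
  have Pb: "norm (W t r - W (t-1) r) \<le> \<eta> * c * Q t" if "r < m" for r
  proof (cases t)
    case 0 thus ?thesis using eta_pos c_nn by (simp add: Q_def)
  next
    case (Suc k) thus ?thesis using Db[OF that, of k] by (simp add: Qrec)
  qed
  show ?thesis
  proof (intro allI impI)
    fix i assume i: "i < n"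
    define hx where "hx s r = inner (W s r) (x i)" for s r
    define T where "T r = (1/sqrt m) * a r * ((relu (hx (Suc t) r) - relu (hx t r))
        - \<beta> * (relu (hx t r) - relu (hx (t-1) r)) + \<eta> * ind (hx t r \<ge> 0) * inner (G t r) (x i))" for r
    define K where "K = 2 * \<eta> * sqrt (real n) / real m * (v t + \<beta> * Q t)"
    have sm: "sqrt (real m) * sqrt (real m) = real m" using m_pos by simp
    have xi_eq: "\<xi> s i = (1/sqrt m) * (\<Sum>r<m. a r * relu (hx s r)) - y i" for s
      by (simp add: \<xi>_def net_def hx_def)
    have termeq: "(1/sqrt m) * a r * ind (hx t r \<ge> 0) * inner (G t r) (x i)
       = (\<Sum>j<n. (1/real m) * (inner (x i) (x j) * ind (inner (W t r) (x i) \<ge> 0 \<and> inner (W t r) (x j) \<ge> 0)) * \<xi> t j)"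
      if r: "r < m" for r
    proof -
      have gi: "inner (G t r) (x i) = (1/sqrt m) * (\<Sum>j<n. (\<xi> t j * a r * ind (inner (W t r) (x j) \<ge> 0)) * inner (x j) (x i))"
        by (simp add: G_def loss_grad_def inner_sum_left \<xi>_def)
      have aa: "a r * a r = 1" using a_sign r by auto
      show ?thesis unfolding gi sum_distrib_left
      proof (rule sum.cong)
        fix j assume "j \<in> {..<n}"
        have "(1/sqrt m) * a r * ind (hx t r \<ge> 0) * ((1/sqrt m) * (\<xi> t j * a r * ind (inner (W t r) (x j) \<ge> 0) * inner (x j) (x i)))
          = (1/(sqrt m * sqrt m)) * (a r * a r) * (ind (hx t r \<ge> 0) * ind (inner (W t r) (x j) \<ge> 0)) * inner (x j) (x i) * \<xi> t j"
          by (simp add: algebra_simps)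
        also have "\<dots> = (1/real m) * (inner (x i) (x j) * ind (inner (W t r) (x i) \<ge> 0 \<and> inner (W t r) (x j) \<ge> 0)) * \<xi> t j"
          unfolding sm aa by (simp add: ind_def hx_def inner_commute)
        finally show "(1/sqrt m) * a r * ind (hx t r \<ge> 0) * ((1/sqrt m) * (\<xi> t j * a r * ind (inner (W t r) (x j) \<ge> 0) * inner (x j) (x i)))
          = (1/real m) * (inner (x i) (x j) * ind (inner (W t r) (x i) \<ge> 0 \<and> inner (W t r) (x j) \<ge> 0)) * \<xi> t j" .
      qed simp
    qed
    have HG: "(\<Sum>j<n. Hmat m x (W t) i j * \<xi> t j) = (\<Sum>r<m. (1/sqrt m) * a r * ind (hx t r \<ge> 0) * inner (G t r) (x i))"
    proof -
      have "(\<Sum>r<m. (1/sqrt m) * a r * ind (hx t r \<ge> 0) * inner (G t r) (x i))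
          = (\<Sum>r<m. \<Sum>j<n. (1/real m) * (inner (x i) (x j) * ind (inner (W t r) (x i) \<ge> 0 \<and> inner (W t r) (x j) \<ge> 0)) * \<xi> t j)"
        by (rule sum.cong) (simp_all only: termeq lessThan_iff)
      also have "\<dots> = (\<Sum>j<n. \<Sum>r<m. (1/real m) * (inner (x i) (x j) * ind (inner (W t r) (x i) \<ge> 0 \<and> inner (W t r) (x j) \<ge> 0)) * \<xi> t j)"
        by (rule sum.swap)
      also have "\<dots> = (\<Sum>j<n. Hmat m x (W t) i j * \<xi> t j)"
        by (simp add: Hmat_def sum_distrib_left sum_distrib_right)
      finally show ?thesis by simp
    qed
    have Tform: "T r = (1/sqrt m) * (a r * relu (hx (Suc t) r)) - (1+\<beta>) * ((1/sqrt m) * (a r * relu (hx t r)))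
        + \<beta> * ((1/sqrt m) * (a r * relu (hx (t-1) r))) + \<eta> * ((1/sqrt m) * a r * ind (hx t r \<ge> 0) * inner (G t r) (x i))" for r
      by (simp add: T_def algebra_simps add_divide_distrib)
    have Esum: "\<xi> (t+1) i - (1 + \<beta>) * \<xi> t i + \<beta> * \<xi> (t-1) i + \<eta> * (\<Sum>j<n. Hmat m x (W t) i j * \<xi> t j)
        = (\<Sum>r<m. T r)"
    proof -
      have e1: "(\<Sum>r<m. T r) = (\<Sum>r<m. (1/sqrt m) * (a r * relu (hx (Suc t) r))) - (1+\<beta>) * (\<Sum>r<m. (1/sqrt m) * (a r * relu (hx t r)))
        + \<beta> * (\<Sum>r<m. (1/sqrt m) * (a r * relu (hx (t-1) r))) + \<eta> * (\<Sum>r<m. (1/sqrt m) * a r * ind (hx t r \<ge> 0) * inner (G t r) (x i))"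
        by (simp only: Tform sum.distrib sum_subtractf sum_distrib_left)
      have e2: "(\<Sum>r<m. (1/sqrt m) * (a r * relu (hx s r))) = \<xi> s i + y i" for s
        unfolding xi_eq by (simp add: sum_distrib_left)
      show ?thesis unfolding e1 e2 HG by (simp add: algebra_simps)
    qed
    have Ssub: "S_set m R x W0 i \<subseteq> {..<m}" by (auto simp: S_set_def)
    have Sp: "S_perp m R x W0 i = {..<m} - S_set m R x W0 i" by (simp add: S_perp_def)
    have split: "(\<Sum>r<m. T r) = (\<Sum>r\<in>S_perp m R x W0 i. T r) + (\<Sum>r\<in>S_set m R x W0 i. T r)"
      unfolding Sp by (rule sum.subset_diff[OF Ssub]) simp
    have zero: "T r = 0" if rS: "r \<in> S_set m R x W0 i" for r
    proof -
      have r: "r < m" and nA: "\<not> A_event R x W0 i r" using rS by (auto simp: S_set_def)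
      have sg: "(hx s r \<ge> 0) = (inner (x i) (W0 r) \<ge> 0)" if "s \<le> Suc t" for s
      proof -
        have "norm (W s r - W0 r) \<le> R" using stay_close r that W0' by auto
        thus ?thesis using nA unfolding A_event_def by (auto simp: hx_def inner_commute)
      qed
      have s1: "(hx (Suc t) r \<ge> 0) = (hx t r \<ge> 0)" using sg[of "Suc t"] sg[of t] by simp
      have s2: "(hx t r \<ge> 0) = (hx (t-1) r \<ge> 0)" using sg[of "t-1"] sg[of t] by simp
      have hrec: "hx (Suc t) r = hx t r - \<eta> * inner (G t r) (x i) + \<beta> * (hx t r - hx (t-1) r)"
        unfolding hx_def rec[of t r] by (simp add: inner_diff_left inner_add_left)
      have q1: "relu (hx (Suc t) r) - relu (hx t r) = ind (hx t r \<ge> 0) * (- \<eta> * inner (G t r) (x i) + \<beta> * (hx t r - hx (t-1) r))"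
        using relu_same[OF s1] hrec by simp
      have q2: "relu (hx t r) - relu (hx (t-1) r) = ind (hx t r \<ge> 0) * (hx t r - hx (t-1) r)"
      proof -
        have "ind (hx (t-1) r \<ge> 0) = ind (hx t r \<ge> 0)" using s2 by (simp only:)
        thus ?thesis using relu_same[OF s2] by (simp only:)
      qed
      show ?thesis unfolding T_def q1 q2
        by (simp add: algebra_simps)
    qed
    have diffb: "\<bar>hx s' r - hx s r\<bar> \<le> norm (W s' r - W s r)" for s s' r
    proof -
      have "\<bar>hx s' r - hx s r\<bar> = \<bar>inner (W s' r - W s r) (x i)\<bar>" by (simp add: hx_def inner_diff_left)
      also have "\<dots> \<le> norm (W s' r - W s r) * norm (x i)" by (rule Cauchy_Schwarz_ineq2)
      also have "\<dots> \<le> norm (W s' r - W s r) * 1" using x_norm i by (intro mult_left_mono) auto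
      finally show ?thesis by simp
    qed
    have Tb: "\<bar>T r\<bar> \<le> K" if rS: "r \<in> S_perp m R x W0 i" for r
    proof -
      have r: "r < m" using rS by (auto simp: S_perp_def)
      have gx: "\<bar>inner (G t r) (x i)\<bar> \<le> c * v t"
      proof -
        have "\<bar>inner (G t r) (x i)\<bar> \<le> norm (G t r) * norm (x i)" by (rule Cauchy_Schwarz_ineq2)
        also have "\<dots> \<le> norm (G t r) * 1" using x_norm i by (intro mult_left_mono) auto
        finally show ?thesis using Gb[OF r, of t] by simp
      qed
      have i01: "0 \<le> ind (hx t r \<ge> 0)" "ind (hx t r \<ge> 0) \<le> 1" by (rule ind_01)+
      have "\<bar>(relu (hx (Suc t) r) - relu (hx t r)) - \<beta> * (relu (hx t r) - relu (hx (t-1) r))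
              + \<eta> * ind (hx t r \<ge> 0) * inner (G t r) (x i)\<bar>
          \<le> \<bar>relu (hx (Suc t) r) - relu (hx t r)\<bar> + \<beta> * \<bar>relu (hx t r) - relu (hx (t-1) r)\<bar>
              + \<eta> * \<bar>inner (G t r) (x i)\<bar>"
      proof -
        have "\<bar>\<eta> * ind (hx t r \<ge> 0) * inner (G t r) (x i)\<bar> \<le> \<eta> * \<bar>inner (G t r) (x i)\<bar>"
          using eta_pos i01 by (simp add: abs_mult mult_left_le_one_le mult_le_one)
        moreover have "\<bar>\<beta> * (relu (hx t r) - relu (hx (t-1) r))\<bar> = \<beta> * \<bar>relu (hx t r) - relu (hx (t-1) r)\<bar>"
          using beta_range by (simp add: abs_mult)
        ultimately show ?thesis by linarith
      qed
      also have "\<dots> \<le> \<eta> * c * (v t + \<beta> * Q t) + \<beta> * (\<eta> * c * Q t) + \<eta> * (c * v t)"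
      proof (intro add_mono mult_left_mono)
        show "\<bar>relu (hx (Suc t) r) - relu (hx t r)\<bar> \<le> \<eta> * c * (v t + \<beta> * Q t)"
          using relu_lip diffb Db[OF r, of t] by (meson order_trans)
        show "\<bar>relu (hx t r) - relu (hx (t-1) r)\<bar> \<le> \<eta> * c * Q t"
          using relu_lip diffb Pb[OF r] by (meson order_trans)
      qed (use gx eta_pos beta_range in auto)
      finally have b: "\<bar>(relu (hx (Suc t) r) - relu (hx t r)) - \<beta> * (relu (hx t r) - relu (hx (t-1) r))
              + \<eta> * ind (hx t r \<ge> 0) * inner (G t r) (x i)\<bar> \<le> 2 * (\<eta> * c * (v t + \<beta> * Q t))"
        by (simp add: algebra_simps)
      have "\<bar>T r\<bar> = (1/sqrt m) * \<bar>(relu (hx (Suc t) r) - relu (hx t r)) - \<beta> * (relu (hx t r) - relu (hx (t-1) r))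
              + \<eta> * ind (hx t r \<ge> 0) * inner (G t r) (x i)\<bar>"
        using a_abs[OF r] by (simp add: T_def abs_mult)
      also have "\<dots> \<le> (1/sqrt m) * (2 * (\<eta> * c * (v t + \<beta> * Q t)))"
        using b by (intro mult_left_mono) auto
      also have "\<dots> = K"
        unfolding K_def c_def using sm by (simp add: field_simps)
      finally show ?thesis .
    qed
    have "\<bar>\<xi> (t+1) i - (1 + \<beta>) * \<xi> t i + \<beta> * \<xi> (t-1) i + \<eta> * (\<Sum>j<n. Hmat m x (W t) i j * \<xi> t j)\<bar>
        = \<bar>\<Sum>r\<in>S_perp m R x W0 i. T r\<bar>"
      unfolding Esum split using zero by simp
    also have "\<dots> \<le> (\<Sum>r\<in>S_perp m R x W0 i. \<bar>T r\<bar>)" by (rule sum_abs)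
    also have "\<dots> \<le> real (card (S_perp m R x W0 i)) * K" by (rule sum_bounded_above) (use Tb in auto)
    also have "\<dots> = 2 * \<eta> * sqrt (real n) * real (card (S_perp m R x W0 i)) / real m
       * (vnorm n (\<xi> t) + \<beta> * (\<Sum>s<t. \<beta> ^ (t - 1 - s) * vnorm n (\<xi> s)))"
      by (simp add: K_def v_def Q_def)
    finally show "\<bar>\<xi> (t+1) i - (1 + \<beta>) * \<xi> t i + \<beta> * \<xi> (t-1) i
      + \<eta> * (\<Sum>j<n. Hmat m x (W t) i j * \<xi> t j)\<bar>
    \<le> 2 * \<eta> * sqrt (real n) * real (card (S_perp m R x W0 i)) / real m
       * (vnorm n (\<xi> t) + \<beta> * (\<Sum>s<t. \<beta> ^ (t - 1 - s) * vnorm n (\<xi> s)))" .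
  qed
qed

end
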